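(* Let $W$ be a finite Weyl group with root system $R\subset V$, let $U\subseteq V$ be a subspace with orthogonal complement $U^\perp$, let $w\in W$, and let $X=\bigcap_{\alpha\in I(w)\cap R_U}\ker\alpha$ (so $U^\perp\subseteq X$). Then the inversion arrangement $\mathcal{I}(\mathrm{fl}_U(w))$ (an arrangement in $U$) is equal to the quotient $\mathcal{I}(w)_X/U^\perp$ of the localization $\mathcal{I}(w)_X$, under the identification $V/U^\perp\cong U$.
   Context: $R^+$, $R^-$ are the positive and negative roots; $I(w)=\{\alpha\in R^+:w^{-1}\alpha\in R^-\}$; $\mathcal{I}(w)$ is the arrangement of hyperplanes $\ker\alpha$, $\alpha\in I(w)$. $R_U=R\cap U$ is a root system in $U$ with positive roots $R^+\cap U$ and Weyl group $W_U$; $\mathrm{fl}_U(w)$ is the unique element of $W_U$ whose inversion set in $R_U$ is $I(w)\cap U$, and $\mathcal{I}(\mathrm{fl}_U(w))$ is the arrangement in $U$ of the hyperplanes $\{x\in U:(x,\alpha)=0\}$, $\alpha\in I(w)\cap U$. For a flat $X$ of an arrangement $\mathcal{A}$, the localization $\mathcal{A}_X$ consists of the hyperplanes containing $X$; for a subspace $Y$ of the center, $\mathcal{A}/Y$ is the arrangement $\{H/Y\}$ in $V/Y$. *)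

theory Defs
  imports "HOL-Analysis.Analysis"
begin

definition refl_vec :: "'a::euclidean_space \<Rightarrow> 'a \<Rightarrow> 'a" where
  "refl_vec a x = x - (2 * (x \<bullet> a) / (a \<bullet> a)) *\<^sub>R a"

definition root_system :: "'a::euclidean_space set \<Rightarrow> bool" where
  "root_system R \<longleftrightarrow> finite R \<and> 0 \<notin> R
     \<and> (\<forall>a\<in>R. refl_vec a ` R = R)
     \<and> (\<forall>a\<in>R. \<forall>b\<in>R. 2 * (b \<bullet> a) / (a \<bullet> a) \<in> \<int>)
     \<and> (\<forall>a\<in>R. \<forall>c::real. c *\<^sub>R a \<in> R \<longrightarrow> c = 1 \<or> c = -1)"

text \<open>The Weyl group: the group generated by the reflections s_a, a in R
  (as R is finite, W is finite and the generated monoid is the generated group).\<close>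
inductive_set weyl_group :: "'a::euclidean_space set \<Rightarrow> ('a \<Rightarrow> 'a) set"
  for R where
    weyl_id: "id \<in> weyl_group R"
  | weyl_step: "w \<in> weyl_group R \<Longrightarrow> a \<in> R \<Longrightarrow> refl_vec a \<circ> w \<in> weyl_group R"

text \<open>Positive system: determined by a vector rho not orthogonal to any root.\<close>
definition pos_roots :: "'a::euclidean_space set \<Rightarrow> 'a \<Rightarrow> 'a set" where
  "pos_roots R rho = {a\<in>R. a \<bullet> rho > 0}"

definition neg_roots :: "'a::euclidean_space set \<Rightarrow> 'a \<Rightarrow> 'a set" where
  "neg_roots R rho = {a\<in>R. a \<bullet> rho < 0}"

definition inv_set :: "'a::euclidean_space set \<Rightarrow> 'a \<Rightarrow> ('a \<Rightarrow> 'a) \<Rightarrow> 'a set" where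
  "inv_set R rho w = {a \<in> pos_roots R rho. inv w a \<in> neg_roots R rho}"

text \<open>Hyperplane ker a (roots identified with linear forms via the inner product).\<close>
definition hyp :: "'a::euclidean_space \<Rightarrow> 'a set" where
  "hyp a = {x. x \<bullet> a = 0}"

definition inv_arr :: "'a::euclidean_space set \<Rightarrow> 'a \<Rightarrow> ('a \<Rightarrow> 'a) \<Rightarrow> 'a set set" where
  "inv_arr R rho w = hyp ` inv_set R rho w"

text \<open>I(fl_U(w)): arrangement in U of the hyperplanes {x in U. (x,a)=0}, a in I(w) \<inter> U
  (the inversion set of fl_U(w) in R_U is I(w) \<inter> U by definition of fl_U).\<close>
definition inv_arr_fl :: "'a::euclidean_space set \<Rightarrow> 'a \<Rightarrow> 'a set \<Rightarrow> ('a \<Rightarrow> 'a) \<Rightarrow> 'a set set" where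
  "inv_arr_fl R rho U w = (\<lambda>a. {x\<in>U. x \<bullet> a = 0}) ` (inv_set R rho w \<inter> U)"

definition localization :: "'a set set \<Rightarrow> 'a set \<Rightarrow> 'a set set" where
  "localization A X = {H \<in> A. X \<subseteq> H}"

definition orth_compl :: "'a::euclidean_space set \<Rightarrow> 'a set" where
  "orth_compl U = {x. \<forall>u\<in>U. x \<bullet> u = 0}"

definition orth_proj :: "'a::euclidean_space set \<Rightarrow> 'a \<Rightarrow> 'a" where
  "orth_proj U x = (THE u. u \<in> U \<and> x - u \<in> orth_compl U)"

text \<open>Quotient A/U^perp, transported to U along the identification V/U^perp \<cong> U
  induced by the orthogonal projection: H/U^perp corresponds to proj_U(H).\<close>
definition quot_arr_U :: "'a::euclidean_space set \<Rightarrow> 'a set set \<Rightarrow> 'a set set" where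
  "quot_arr_U U A = (\<lambda>H. orth_proj U ` H) ` A"

end

theory Submission
  imports Defs
begin

lemma proj_char:
  fixes U :: "'a::euclidean_space set"
  assumes U: "subspace U"
  shows "orth_proj U x \<in> U \<and> x - orth_proj U x \<in> orth_compl U"
proof -
  obtain y z where y: "y \<in> span U" and z: "\<And>w. w \<in> span U \<Longrightarrow> orthogonal z w" and xe: "x = y + z"
    using orthogonal_subspace_decomp_exists[of U x] by metis
  have yU: "y \<in> U" using y U by (metis span_eq_iff)
  have zc: "x - y \<in> orth_compl U" using z xe span_base
    by (auto simp: orth_compl_def orthogonal_def)
  have uniq: "u = y" if "u \<in> U" "x - u \<in> orth_compl U" for u
  proof -
    have d: "u - y \<in> U" using that(1) yU U by (simp add: subspace_diff)
    have "(x - y) \<bullet> (u - y) = 0" "(x - u) \<bullet> (u - y) = 0"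
      using zc that(2) d by (auto simp: orth_compl_def)
    moreover have "(u - y) \<bullet> (u - y) = (x - y) \<bullet> (u - y) - (x - u) \<bullet> (u - y)"
      by (simp add: inner_diff_left)
    ultimately have "(u - y) \<bullet> (u - y) = 0" by linarith
    then show ?thesis by simp
  qed
  have "orth_proj U x = y" unfolding orth_proj_def
  proof (rule the_equality)
    show "y \<in> U \<and> x - y \<in> orth_compl U" using yU zc by blast
    show "\<And>u. u \<in> U \<and> x - u \<in> orth_compl U \<Longrightarrow> u = y" using uniq by blast
  qed
  then show ?thesis using yU zc by simp
qed

lemma proj_id:
  fixes U :: "'a::euclidean_space set"
  assumes U: "subspace U" and u: "u \<in> U"
  shows "orth_proj U u = u"
proof -
  have p: "orth_proj U u \<in> U" "u - orth_proj U u \<in> orth_compl U" using proj_char[OF U] by auto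
  have d: "u - orth_proj U u \<in> U" using p(1) u U by (simp add: subspace_diff)
  have "(u - orth_proj U u) \<bullet> (u - orth_proj U u) = 0" using p(2) d by (auto simp: orth_compl_def)
  then show ?thesis by simp
qed

lemma proj_hyp:
  fixes U :: "'a::euclidean_space set"
  assumes U: "subspace U" and a: "a \<in> U"
  shows "orth_proj U ` hyp a = {x\<in>U. x \<bullet> a = 0}"
proof
  show "orth_proj U ` hyp a \<subseteq> {x\<in>U. x \<bullet> a = 0}"
  proof
    fix y assume "y \<in> orth_proj U ` hyp a"
    then obtain x where x: "x \<bullet> a = 0" and y: "y = orth_proj U x" by (auto simp: hyp_def)
    have p: "y \<in> U" "(x - y) \<bullet> a = 0" using proj_char[OF U, of x] a y by (auto simp: orth_compl_def)
    then show "y \<in> {x\<in>U. x \<bullet> a = 0}" using x by (simp add: inner_diff_left)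
  qed
next
  show "{x\<in>U. x \<bullet> a = 0} \<subseteq> orth_proj U ` hyp a"
  proof
    fix y assume "y \<in> {x\<in>U. x \<bullet> a = 0}"
    then have "y \<in> hyp a" "orth_proj U y = y" using proj_id[OF U] by (auto simp: hyp_def)
    then show "y \<in> orth_proj U ` hyp a" by (metis image_eqI)
  qed
qed

lemma loc_in_span:
  fixes S :: "'a::euclidean_space set"
  assumes "(\<Inter>a\<in>S. hyp a) \<subseteq> hyp b"
  shows "b \<in> span S"
proof -
  obtain y z where y: "y \<in> span S" and z: "\<And>w. w \<in> span S \<Longrightarrow> orthogonal z w" and xe: "b = y + z"
    using orthogonal_subspace_decomp_exists[of S b] by metis
  have "z \<in> (\<Inter>a\<in>S. hyp a)" using z span_base by (auto simp: hyp_def orthogonal_def)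
  then have "z \<bullet> b = 0" using assms by (auto simp: hyp_def)
  moreover have "z \<bullet> y = 0" using z y by (simp add: orthogonal_def)
  ultimately have "z \<bullet> z = 0" using xe by (simp add: inner_add_right)
  then show ?thesis using xe y by simp
qed

theorem mainTheorem12:
  fixes R :: "'a::euclidean_space set" and rho :: 'a and U :: "'a set"
    and w :: "'a \<Rightarrow> 'a" and X :: "'a set"
  assumes "root_system R"
    and "\<forall>a\<in>R. a \<bullet> rho \<noteq> 0"
    and "subspace U"
    and "w \<in> weyl_group R"
    and "X = (\<Inter>a\<in>inv_set R rho w \<inter> U. hyp a)"
  shows "inv_arr_fl R rho U w = quot_arr_U U (localization (inv_arr R rho w) X)"
proof -
  let ?I = "inv_set R rho w"
  have loc: "localization (inv_arr R rho w) X = hyp ` (?I \<inter> U)"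
  proof
    show "localization (inv_arr R rho w) X \<subseteq> hyp ` (?I \<inter> U)"
    proof
      fix H assume "H \<in> localization (inv_arr R rho w) X"
      then obtain b where b: "b \<in> ?I" "H = hyp b" "X \<subseteq> hyp b"
        by (auto simp: localization_def inv_arr_def)
      have "b \<in> span (?I \<inter> U)" using loc_in_span b(3) assms(5) by blast
      moreover have "span (?I \<inter> U) \<subseteq> U" using assms(3) by (simp add: span_minimal)
      ultimately show "H \<in> hyp ` (?I \<inter> U)" using b by auto
    qed
  next
    show "hyp ` (?I \<inter> U) \<subseteq> localization (inv_arr R rho w) X"
      using assms(5) by (auto simp: localization_def inv_arr_def)
  qed
  show ?thesis unfolding loc quot_arr_U_def inv_arr_fl_def image_image
    using proj_hyp[OF assms(3)] by (intro image_cong) auto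
qed

end
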